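(* Let $C$ be an $[n,k]$ code over $\mathbb{F}_q$ with $d(C^\perp)=4$. Then $\gamma(C)\le k-2$ $(=k-d(C^\perp)+2)$.
   Context: An $[n,k]$ code over $\mathbb{F}_q$ is a $k$-dimensional subspace $C\subseteq\mathbb{F}_q^n$; write $E=\{1,\dots,n\}$. For $\bm{x}\in\mathbb{F}_q^n$, $\mathrm{supp}(\bm{x})=\{i: x_i\neq 0\}$ and the weight is $|\mathrm{supp}(\bm{x})|$; for $B\subseteq\mathbb{F}_q^n$, $\mathrm{Supp}(B)=\bigcup_{\bm{x}\in B}\mathrm{supp}(\bm{x})$. $C^\perp$ is the dual code with respect to the standard inner product and $d(C^\perp)$ is the minimum weight of a nonzero codeword of $C^\perp$. The covering dimension is $\gamma(C)=\infty$ if $\mathrm{Supp}(C)\neq E$, and otherwise $\gamma(C)$ is the least positive integer $r$ such that $C$ has an $r$-dimensional subspace $D$ with $\mathrm{Supp}(D)=E$. *)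

theory Defs
  imports Main "HOL-Library.Function_Algebras" "HOL-Library.Extended_Nat"
begin

text \<open>Vectors of F_q^n are functions from a finite index type 'n (the coordinate set E,
  with n = CARD('n)) to a finite field 'a (F_q).\<close>

definition cscale :: "'a::field \<Rightarrow> ('n \<Rightarrow> 'a) \<Rightarrow> ('n \<Rightarrow> 'a)" where
  "cscale c x = (\<lambda>i. c * x i)"

global_interpretation fv: vector_space "cscale :: 'a::field \<Rightarrow> ('n \<Rightarrow> 'a) \<Rightarrow> ('n \<Rightarrow> 'a)"
  by unfold_locales (auto simp: cscale_def algebra_simps)

definition is_code :: "('n::finite \<Rightarrow> 'a::{finite,field}) set \<Rightarrow> nat \<Rightarrow> bool" where
  "is_code C k \<longleftrightarrow> fv.subspace C \<and> fv.dim C = k"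

definition supp :: "('n \<Rightarrow> 'a::zero) \<Rightarrow> 'n set" where
  "supp x = {i. x i \<noteq> 0}"

definition Supp :: "('n \<Rightarrow> 'a::zero) set \<Rightarrow> 'n set" where
  "Supp B = (\<Union>x\<in>B. supp x)"

definition weight :: "('n \<Rightarrow> 'a::zero) \<Rightarrow> nat" where
  "weight x = card (supp x)"

definition dual :: "('n::finite \<Rightarrow> 'a::field) set \<Rightarrow> ('n \<Rightarrow> 'a) set" where
  "dual C = {y. \<forall>x\<in>C. (\<Sum>i\<in>UNIV. x i * y i) = 0}"

text \<open>Minimum weight of a nonzero codeword (infinity if there is none).\<close>
definition min_dist :: "('n \<Rightarrow> 'a::zero) set \<Rightarrow> enat" where
  "min_dist D = (INF x\<in>D - {0}. enat (weight x))"

definition covering_dim :: "('n::finite \<Rightarrow> 'a::{finite,field}) set \<Rightarrow> enat" where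
  "covering_dim C = (if Supp C \<noteq> UNIV then \<infinity>
     else enat (LEAST r. 0 < r \<and> (\<exists>D. fv.subspace D \<and> D \<subseteq> C \<and> fv.dim D = r \<and> Supp D = UNIV)))"

end

theory Submission
  imports Defs
begin

definition ev :: "'n \<Rightarrow> ('n \<Rightarrow> 'a::field)" where "ev j = (\<lambda>i. if i = j then 1 else 0)"
definition pnt :: "('n \<Rightarrow> 'a::field) set \<Rightarrow> ('n \<Rightarrow> 'a) \<Rightarrow> ('n \<Rightarrow> 'a) set" where
  "pnt K u = {cscale a u + k | a k. k \<in> K}"
definition lne :: "('n \<Rightarrow> 'a::field) set \<Rightarrow> ('n \<Rightarrow> 'a) \<Rightarrow> ('n \<Rightarrow> 'a) \<Rightarrow> ('n \<Rightarrow> 'a) set" where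
  "lne K u v = {cscale a u + cscale b v + k | a b k. k \<in> K}"
definition indep2 :: "('n \<Rightarrow> 'a::field) set \<Rightarrow> ('n \<Rightarrow> 'a) \<Rightarrow> ('n \<Rightarrow> 'a) \<Rightarrow> bool" where
  "indep2 K u v \<longleftrightarrow> (\<forall>a b. cscale a u + cscale b v \<in> K \<longrightarrow> a = 0 \<and> b = 0)"

lemma cs_app[simp]: "cscale c x i = c * x i" by (simp add: cscale_def)

lemma indep2_notin: fixes K :: "('n \<Rightarrow> 'a::field) set" shows "indep2 K u v \<Longrightarrow> u \<notin> K"
proof
  assume i: "indep2 K u v" and u: "u \<in> K"
  have "cscale 1 u + cscale 0 v = u" by (simp add: fun_eq_iff)
  with u i have "(1::'a) = 0 \<and> (0::'a) = 0" unfolding indep2_def by metis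
  then show False by simp
qed

lemma indep2_sym: fixes K :: "('n \<Rightarrow> 'a::field) set" shows "indep2 K u v \<Longrightarrow> indep2 K v u"
proof -
  have e: "\<And>a b. cscale a v + cscale b u = cscale b u + cscale a v" by (simp add: add.commute)
  show "indep2 K u v \<Longrightarrow> indep2 K v u" unfolding indep2_def by (simp only: e) blast
qed

lemma lne_sub: fixes K :: "('n \<Rightarrow> 'a::field) set" shows "lne K u v \<subseteq> lne K v u"
proof
  fix x assume "x \<in> lne K u v"
  then obtain a b k where x: "x = cscale a u + cscale b v + k" "k \<in> K" unfolding lne_def by auto
  have "x = cscale b v + cscale a u + k" using x(1) by (simp add: add.commute)
  with x(2) show "x \<in> lne K v u" unfolding lne_def by blast
qed

lemma lne_sym: fixes K :: "('n \<Rightarrow> 'a::field) set" shows "lne K u v = lne K v u"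
  using lne_sub[of K u v] lne_sub[of K v u] by blast

lemma pnt_sub_lne: "fv.subspace K \<Longrightarrow> pnt K u \<subseteq> lne K u v"
proof
  fix w assume "w \<in> pnt K u"
  then obtain a k where "w = cscale a u + k" "k \<in> K" unfolding pnt_def by auto
  then have "w = cscale a u + cscale 0 v + k" by (auto simp: fun_eq_iff)
  then show "w \<in> lne K u v" using \<open>k\<in>K\<close> unfolding lne_def by blast
qed

lemma self_lne: "fv.subspace K \<Longrightarrow> v \<in> lne K u v"
proof -
  assume "fv.subspace K"
  then have "0 \<in> K" by (rule fv.subspace_0)
  moreover have "v = cscale 0 u + cscale 1 v + 0" by (auto simp: fun_eq_iff)
  ultimately show ?thesis unfolding lne_def by blast
qed

lemma self_pnt: "fv.subspace K \<Longrightarrow> u \<in> pnt K u"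
proof -
  assume "fv.subspace K"
  then have "0 \<in> K" by (rule fv.subspace_0)
  moreover have "u = cscale 1 u + 0" by (auto simp: fun_eq_iff)
  ultimately show ?thesis unfolding pnt_def by blast
qed

lemma indep2_of_notin:
  assumes K: "fv.subspace K" and u: "u \<notin> K" and w: "w \<notin> pnt K u"
  shows "indep2 K u w"
  unfolding indep2_def
proof (intro allI impI)
  fix a b assume h: "cscale a u + cscale b w \<in> K"
  show "a = 0 \<and> b = 0"
  proof (cases "b = 0")
    case False
    have "w = cscale (- a / b) u + cscale (1/b) (cscale a u + cscale b w)"
      using False by (auto simp: fun_eq_iff field_simps)
    moreover have "cscale (1/b) (cscale a u + cscale b w) \<in> K" using fv.subspace_scale[OF K h] .
    ultimately have "w \<in> pnt K u" unfolding pnt_def by blast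
    with w show ?thesis by simp
  next
    case True
    show ?thesis
    proof (rule ccontr)
      assume "\<not> (a = 0 \<and> b = 0)"
      with True have a: "a \<noteq> 0" by simp
      have "u = cscale (1/a) (cscale a u + cscale b w)" using a True by (auto simp: fun_eq_iff)
      with fv.subspace_scale[OF K h, of "1/a"] u show False by simp
    qed
  qed
qed

lemma lne_uniq:
  assumes K: "fv.subspace K" and ind: "indep2 K u v" and w: "w \<in> lne K u v" and wp: "w \<notin> pnt K u"
  shows "lne K u w = lne K u v"
proof -
  obtain a b k where wd: "w = cscale a u + cscale b v + k" and k: "k \<in> K" using w unfolding lne_def by auto
  have b: "b \<noteq> 0"
  proof
    assume "b = 0"
    then have "w = cscale a u + k" using wd by (auto simp: fun_eq_iff)
    with k wp show False unfolding pnt_def by blast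
  qed
  show ?thesis
  proof
    show "lne K u w \<subseteq> lne K u v"
    proof
      fix z assume "z \<in> lne K u w"
      then obtain \<alpha> \<beta> k' where z: "z = cscale \<alpha> u + cscale \<beta> w + k'" and k': "k' \<in> K" unfolding lne_def by auto
      have "z = cscale (\<alpha> + \<beta> * a) u + cscale (\<beta> * b) v + (cscale \<beta> k + k')"
        using z wd by (auto simp: fun_eq_iff algebra_simps)
      moreover have "cscale \<beta> k + k' \<in> K" using K k k' by (simp add: fv.subspace_add fv.subspace_scale)
      ultimately show "z \<in> lne K u v" unfolding lne_def by blast
    qed
  next
    show "lne K u v \<subseteq> lne K u w"
    proof
      fix z assume "z \<in> lne K u v"
      then obtain \<alpha> \<beta> k' where z: "z = cscale \<alpha> u + cscale \<beta> v + k'" and k': "k' \<in> K" unfolding lne_def by auto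
      have "z = cscale (\<alpha> - \<beta> * a / b) u + cscale (\<beta> / b) w + (k' + cscale (- \<beta> / b) k)"
        using z wd b by (auto simp: fun_eq_iff field_simps)
      moreover have "k' + cscale (- \<beta> / b) k \<in> K" by (rule fv.subspace_add[OF K k' fv.subspace_scale[OF K k]])
      ultimately show "z \<in> lne K u w" unfolding lne_def by blast
    qed
  qed
qed

lemma lne_E:
  assumes "x \<in> lne K u v"
  obtains a b where "(\<lambda>t. x t - a * u t - b * v t) \<in> K"
proof -
  obtain a b k where x: "x = cscale a u + cscale b v + k" and k: "k \<in> K" using assms unfolding lne_def by auto
  have "k = (\<lambda>t. x t - a * u t - b * v t)" using x by (auto simp: fun_eq_iff)
  with k that show ?thesis by auto
qed

lemma pnt_E:
  assumes "x \<in> pnt K u"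
  obtains a where "(\<lambda>t. x t - a * u t) \<in> K"
proof -
  obtain a k where x: "x = cscale a u + k" and k: "k \<in> K" using assms unfolding pnt_def by auto
  have "k = (\<lambda>t. x t - a * u t)" using x by (auto simp: fun_eq_iff)
  with k that show ?thesis by auto
qed

locale codeK =
  fixes K :: "('n::finite \<Rightarrow> 'a::{finite,field}) set"
  assumes sub: "fv.subspace K" and wt: "\<And>y. y \<in> K \<Longrightarrow> y \<noteq> 0 \<Longrightarrow> 4 \<le> card (supp y)"
begin

lemma zero3:
  assumes y: "y \<in> K" and out: "\<And>t. t \<noteq> i \<Longrightarrow> t \<noteq> j \<Longrightarrow> t \<noteq> l \<Longrightarrow> y t = 0"
  shows "y = 0"
proof (rule ccontr)
  assume "y \<noteq> 0"
  with wt y have "4 \<le> card (supp y)" by simp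
  moreover have "supp y \<subseteq> {i,j,l}" using out unfolding supp_def by auto
  then have "card (supp y) \<le> card {i,j,l}" by (simp add: card_mono)
  moreover have "card {i,j,l} \<le> 3" by (simp add: card_insert_le_m1)
  ultimately show False by simp
qed

lemma zero3_at:
  assumes "y \<in> K" "\<And>t. t \<noteq> i \<Longrightarrow> t \<noteq> j \<Longrightarrow> t \<noteq> l \<Longrightarrow> y t = 0"
  shows "y s = 0"
  using zero3[OF assms] by simp

lemma ev_notK: "ev j \<notin> K"
proof
  assume "ev j \<in> K"
  from zero3_at[OF this, of j j j j] show False by (simp add: ev_def)
qed

lemma ev_indep: assumes "i \<noteq> j" shows "indep2 K (ev i) (ev j)"
  unfolding indep2_def
proof (intro allI impI)
  fix a b assume h: "cscale a (ev i) + cscale b (ev j) \<in> K"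
  have "a = 0" using zero3_at[OF h, of i j j i] assms by (simp add: ev_def)
  moreover have "b = 0" using zero3_at[OF h, of i j j j] assms by (simp add: ev_def)
  ultimately show "a = 0 \<and> b = 0" by simp
qed

lemma ev_not_lne: assumes "j' \<noteq> c" "j' \<noteq> j" shows "ev j' \<notin> lne K (ev c) (ev j)"
proof
  assume "ev j' \<in> lne K (ev c) (ev j)"
  then obtain a b where h: "(\<lambda>t. ev j' t - a * ev c t - b * ev j t) \<in> K" by (rule lne_E)
  from zero3_at[OF h, of j' c j j'] assms show False by (simp add: ev_def)
qed

definition X :: "'n \<Rightarrow> 'n \<Rightarrow> ('n \<Rightarrow> 'a)" where "X a b = ev a + ev b"

lemma X_app: "X a b t = ev a t + ev b t" by (simp add: X_def)

lemma X_notK: assumes "a \<noteq> b" shows "X a b \<notin> K"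
proof
  assume h: "X a b \<in> K"
  from zero3_at[OF h, of a b b a] assms show False by (simp add: ev_def X_app)
qed

lemma ev_not_pntX: assumes "a \<noteq> b" shows "ev j \<notin> pnt K (X a b)"
proof
  assume "ev j \<in> pnt K (X a b)"
  then obtain c where h: "(\<lambda>t. ev j t - c * X a b t) \<in> K" by (rule pnt_E)
  have z: "\<And>s. ev j s - c * X a b s = 0" using zero3_at[OF h, of a b j] by (simp add: ev_def X_app)
  have 1: "ev j a - c * X a b a = 0" "ev j b - c * X a b b = 0" "ev j j - c * X a b j = 0" using z by auto
  from 1 assms show False by (auto simp: ev_def X_app split: if_splits)
qed

lemma X_not_pnt: assumes "c \<noteq> a" "c \<noteq> b" "a \<noteq> b" shows "X a b \<notin> pnt K (ev c)"
proof
  assume "X a b \<in> pnt K (ev c)"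
  then obtain d where h: "(\<lambda>t. X a b t - d * ev c t) \<in> K" by (rule pnt_E)
  from zero3_at[OF h, of a b c a] assms show False by (simp add: ev_def X_app)
qed

lemma X_lne: assumes "c \<noteq> a" "c \<noteq> b" "a \<noteq> b" "X a b \<in> lne K (ev c) (ev c')"
  shows "c' \<noteq> a \<and> c' \<noteq> b"
proof -
  obtain d e where h: "(\<lambda>t. X a b t - d * ev c t - e * ev c' t) \<in> K" using assms(4) by (rule lne_E)
  show ?thesis
  proof (intro conjI notI)
    assume "c' = a"
    from zero3_at[OF h, of a b c b] assms this show False by (simp add: ev_def X_app)
  next
    assume "c' = b"
    from zero3_at[OF h, of a b c a] assms this show False by (simp add: ev_def X_app)
  qed
qed

lemma eva_lne: "ev a \<in> lne K (X a b) (ev b)"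
proof -
  have "ev a = cscale 1 (X a b) + cscale (-1) (ev b) + 0" by (auto simp: fun_eq_iff X_app)
  moreover have "0 \<in> K" using sub by (rule fv.subspace_0)
  ultimately show ?thesis unfolding lne_def by blast
qed


lemma pnt_img: "pnt K u = (\<lambda>(a,k). cscale a u + k) ` (UNIV \<times> K)"
  unfolding pnt_def by auto

lemma lne_img: "lne K u v = (\<lambda>(a,b,k). cscale a u + cscale b v + k) ` (UNIV \<times> UNIV \<times> K)"
  unfolding lne_def image_def by fastforce

lemma card_pnt: assumes u: "u \<notin> K" shows "card (pnt K u) = card (UNIV :: 'a set) * card K"
proof -
  have "inj_on (\<lambda>(a,k). cscale a u + k) (UNIV \<times> K)"
  proof (rule inj_onI, clarify)
    fix a k a' k' assume k: "k \<in> K" and k': "k' \<in> K" and e: "cscale a u + k = cscale a' u + k'"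
    have aa: "a = a'"
    proof (rule ccontr)
      assume ne: "a \<noteq> a'"
      have h: "\<And>x. (a - a') * u x = k' x - k x" using e by (auto simp: fun_eq_iff algebra_simps)
      have "u = cscale (1 / (a - a')) (k' - k)"
      proof
        fix x
        have "u x = (1/(a-a')) * ((a - a') * u x)" using ne by simp
        then show "u x = cscale (1 / (a - a')) (k' - k) x" using h[of x] by simp
      qed
      moreover have "cscale (1 / (a - a')) (k' - k) \<in> K"
        using sub k k' by (simp add: fv.subspace_scale fv.subspace_diff)
      ultimately show False using u by simp
    qed
    moreover have "k = k'" using e aa by (auto simp: fun_eq_iff dest!: fun_cong)
    ultimately show "a = a' \<and> k = k'" by simp
  qed
  then show ?thesis unfolding pnt_img by (simp add: card_image card_cartesian_product)
qed

lemma card_lne: assumes ind: "indep2 K u v" shows "card (lne K u v) = card (UNIV :: 'a set) * (card (UNIV :: 'a set) * card K)"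
proof -
  have "inj_on (\<lambda>(a,b,k). cscale a u + cscale b v + k) (UNIV \<times> UNIV \<times> K)"
  proof (rule inj_onI)
    fix x y assume xs: "x \<in> UNIV \<times> UNIV \<times> K" and ys: "y \<in> UNIV \<times> UNIV \<times> K"
      and e0: "(\<lambda>(a,b,k). cscale a u + cscale b v + k) x = (\<lambda>(a,b,k). cscale a u + cscale b v + k) y"
    obtain a b k where x: "x = (a,b,k)" by (cases x) auto
    obtain a' b' k' where y: "y = (a',b',k')" by (cases y) auto
    have k: "k \<in> K" and k': "k' \<in> K" using xs ys x y by auto
    have e: "cscale a u + cscale b v + k = cscale a' u + cscale b' v + k'" using e0 x y by simp
    have "cscale (a - a') u + cscale (b - b') v = k' - k"
      using e by (auto simp: fun_eq_iff algebra_simps dest!: fun_cong)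
    moreover have "k' - k \<in> K" using sub k k' by (simp add: fv.subspace_diff)
    ultimately have "a - a' = 0 \<and> b - b' = 0" using ind unfolding indep2_def by metis
    then have "a = a'" "b = b'" by auto
    moreover have "k = k'" using e \<open>a = a'\<close> \<open>b = b'\<close> by (auto simp: fun_eq_iff dest!: fun_cong)
    ultimately show "x = y" using x y by simp
  qed
  then show ?thesis unfolding lne_img by (simp add: card_image card_cartesian_product)
qed

definition Bc where "Bc = card (UNIV :: 'a set) * (card (UNIV :: 'a set) * card K) - card (UNIV :: 'a set) * card K"
definition Tc where "Tc = card (UNIV :: ('n \<Rightarrow> 'a) set) - card (UNIV :: 'a set) * card K"

lemma card_blk: assumes ind: "indep2 K u v" shows "card (lne K u v - pnt K u) = Bc"
  using card_lne[OF ind] card_pnt[OF indep2_notin[OF ind]] pnt_sub_lne[OF sub]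
  by (simp add: card_Diff_subset Bc_def)

lemma card_T: assumes "u \<notin> K" shows "card (UNIV - pnt K u) = Tc"
  using card_pnt[OF assms] by (simp add: card_Diff_subset Tc_def)

lemma blk_disj:
  assumes i1: "indep2 K u v1" and i2: "indep2 K u v2"
    and w1: "w \<in> lne K u v1 - pnt K u" and w2: "w \<in> lne K u v2 - pnt K u"
  shows "lne K u v1 = lne K u v2"
  using lne_uniq[OF sub i1, of w] lne_uniq[OF sub i2, of w] w1 w2 by auto

lemma Bc_pos: "0 < Bc"
proof -
  have q: "2 \<le> card (UNIV :: 'a set)"
  proof -
    have "{0::'a, 1} \<subseteq> UNIV" by simp
    then have "card {0::'a,1} \<le> card (UNIV :: 'a set)" by (rule card_mono[OF finite_UNIV])
    then show ?thesis by simp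
  qed
  have "0 < card K" using fv.subspace_0[OF sub] by (auto simp: card_gt_0_iff)
  then have "card (UNIV :: 'a set) * card K < card (UNIV :: 'a set) * (card (UNIV :: 'a set) * card K)" using q by simp
  then show ?thesis unfolding Bc_def by simp
qed


lemma comb:
  fixes a b c :: 'n
  assumes H: "\<And>u v. indep2 K u v \<Longrightarrow> \<exists>j. ev j \<in> lne K u v"
    and ab: "a \<noteq> b" and ca: "c \<noteq> a" and cb: "c \<noteq> b"
  shows False
proof -
  define n where "n = card (UNIV :: 'n set)"
  define Bl where "Bl j = lne K (ev c) (ev j) - pnt K (ev c)" for j
  have XK: "(X a b) \<notin> K" using X_notK[OF ab] .
  have disj: "\<forall>j\<in>UNIV - {c}. \<forall>j'\<in>UNIV - {c}. j \<noteq> j' \<longrightarrow> Bl j \<inter> Bl j' = {}"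
  proof (intro ballI impI)
    fix j j' assume j: "j \<in> UNIV - {c}" and j': "j' \<in> UNIV - {c}" and ne: "j \<noteq> j'"
    show "Bl j \<inter> Bl j' = {}"
    proof (rule ccontr)
      assume "Bl j \<inter> Bl j' \<noteq> {}"
      then obtain w where "w \<in> Bl j" "w \<in> Bl j'" by auto
      then have "lne K (ev c) (ev j) = lne K (ev c) (ev j')"
        using blk_disj[OF ev_indep ev_indep, of c j j' w] j j' unfolding Bl_def by auto
      then have "ev j' \<in> lne K (ev c) (ev j)" using self_lne[OF sub] by metis
      with ev_not_lne[of j' c j] j' ne show False by auto
    qed
  qed
  have cardU: "card (\<Union>j\<in>UNIV - {c}. Bl j) = (n - 1) * Bc"
  proof -
    have "card (\<Union>j\<in>UNIV - {c}. Bl j) = (\<Sum>j\<in>UNIV - {c}. card (Bl j))"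
      using card_UN_disjoint[OF _ _ disj] by simp
    also have "\<dots> = (\<Sum>j\<in>UNIV - {c}. Bc)"
      by (rule sum.cong) (auto simp: Bl_def intro!: card_blk ev_indep)
    also have "\<dots> = (n - 1) * Bc" by (simp add: n_def card_Diff_singleton)
    finally show ?thesis .
  qed
  have Usub: "(\<Union>j\<in>UNIV - {c}. Bl j) \<subseteq> UNIV - pnt K (ev c)" unfolding Bl_def by auto
  have F1: "(n - 1) * Bc \<le> Tc"
    using card_mono[OF _ Usub] cardU card_T[OF ev_notK] by simp
  define L where "L = (\<lambda>j. lne K (X a b) (ev j)) ` (UNIV - {b})"
  have indX: "indep2 K (X a b) (ev j)" for j
    using indep2_of_notin[OF sub XK, of "ev j"] ev_not_pntX[OF ab, of j] by simp
  have ab_line: "lne K (X a b) (ev a) = lne K (X a b) (ev b)"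
    using lne_uniq[OF sub indX eva_lne ev_not_pntX[OF ab]] by simp
  have cover: "UNIV - pnt K (X a b) \<subseteq> (\<Union>l\<in>L. l - pnt K (X a b))"
  proof
    fix w assume w: "w \<in> UNIV - pnt K (X a b)"
    then have "indep2 K (X a b) w" using indep2_of_notin[OF sub XK] by auto
    then obtain j where j: "ev j \<in> lne K (X a b) w" using H by blast
    have "lne K (X a b) (ev j) = lne K (X a b) w"
      using lne_uniq[OF sub \<open>indep2 K (X a b) w\<close> j] ev_not_pntX[OF ab] by simp
    then have wj: "w \<in> lne K (X a b) (ev j)" using self_lne[OF sub] by metis
    define j' where "j' = (if j = b then a else j)"
    have "lne K (X a b) (ev j') = lne K (X a b) (ev j)" using ab_line unfolding j'_def by simp
    moreover have "j' \<in> UNIV - {b}" unfolding j'_def using ab by auto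
    ultimately show "w \<in> (\<Union>l\<in>L. l - pnt K (X a b))" using wj w unfolding L_def by blast
  qed
  have cardL: "card (UNIV - pnt K (X a b)) \<le> card L * Bc"
  proof -
    have "card (UNIV - pnt K (X a b)) \<le> card (\<Union>l\<in>L. l - pnt K (X a b))"
      by (rule card_mono[OF _ cover]) simp
    also have "\<dots> \<le> (\<Sum>l\<in>L. card (l - pnt K (X a b)))" by (rule card_UN_le) simp
    also have "\<dots> = (\<Sum>l\<in>L. Bc)"
      by (rule sum.cong) (auto simp: L_def intro!: card_blk indX)
    also have "\<dots> = card L * Bc" by simp
    finally show ?thesis .
  qed
  have TX: "card (UNIV - pnt K (X a b)) = Tc" by (rule card_T[OF XK])
  have Lle: "card L \<le> n - 1" unfolding L_def n_def
    using card_image_le[of "UNIV - {b}" "\<lambda>j. lne K (X a b) (ev j)"] by (simp add: card_Diff_singleton)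
  have "Tc \<le> (n - 1) * Bc" using cardL TX Lle by (metis le_trans mult_le_mono1)
  with F1 have Teq: "Tc = (n - 1) * Bc" by simp
  have Ueq: "(\<Union>j\<in>UNIV - {c}. Bl j) = UNIV - pnt K (ev c)"
    by (rule card_subset_eq[OF _ Usub]) (use cardU Teq card_T[OF ev_notK] in simp_all)
  have "(X a b) \<in> UNIV - pnt K (ev c)" using X_not_pnt[OF ca cb ab] by simp
  with Ueq obtain c' where c': "c' \<noteq> c" "(X a b) \<in> Bl c'" by auto
  then have Xl: "(X a b) \<in> lne K (ev c) (ev c')" and Xp: "(X a b) \<notin> pnt K (ev c)" unfolding Bl_def by auto
  have c'ab: "c' \<noteq> a" "c' \<noteq> b" using X_lne[OF ca cb ab] Xl by auto
  have "lne K (ev c) (X a b) = lne K (ev c) (ev c')"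
    using lne_uniq[OF sub ev_indep Xl Xp] c' by auto
  then have "ev c' \<in> lne K (X a b) (ev c)" using self_lne[OF sub, of "ev c'" "ev c"] lne_sym by metis
  then have "lne K (X a b) (ev c') = lne K (X a b) (ev c)"
    using lne_uniq[OF sub indX] ev_not_pntX[OF ab] by simp
  then have "\<not> inj_on (\<lambda>j. lne K (X a b) (ev j)) (UNIV - {b})"
    using c' c'ab cb unfolding inj_on_def by blast
  then have "card L \<noteq> card (UNIV - {b})" unfolding L_def
    using inj_on_iff_eq_card[of "UNIV - {b}" "\<lambda>j. lne K (X a b) (ev j)"] by simp
  then have "card L < n - 1" using Lle by (simp add: n_def card_Diff_singleton)
  then have "card L * Bc < (n - 1) * Bc" using Bc_pos by simp
  with cardL TX Teq show False by simp
qed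

end



definition ip :: "('n::finite \<Rightarrow> 'a::field) \<Rightarrow> ('n \<Rightarrow> 'a) \<Rightarrow> 'a" where
  "ip u x = (\<Sum>i\<in>UNIV. u i * x i)"

lemma ip_add: "ip u (x + y) = ip u x + ip u y"
  by (simp add: ip_def algebra_simps sum.distrib)
lemma ip_scale: "ip u (cscale c x) = c * ip u x"
  by (simp add: ip_def algebra_simps sum_distrib_left)
lemma ip_zero: "ip u 0 = 0" by (simp add: ip_def)
lemma ip_diff: "ip u (x - y) = ip u x - ip u y"
  by (simp add: ip_def algebra_simps sum_subtractf)

lemma dual_mem:
  assumes "\<And>x. x \<in> C \<Longrightarrow> \<alpha> * ip u x + \<beta> * ip v x = 0"
  shows "cscale \<alpha> u + cscale \<beta> v \<in> dual C"
  unfolding dual_def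
proof (clarify)
  fix x assume x: "x \<in> C"
  have "(\<Sum>i\<in>UNIV. x i * (cscale \<alpha> u + cscale \<beta> v) i) = \<alpha> * ip u x + \<beta> * ip v x"
    by (simp add: ip_def algebra_simps sum.distrib sum_distrib_left)
  then show "(\<Sum>i\<in>UNIV. x i * (cscale \<alpha> u + cscale \<beta> v) i) = 0" using assms[OF x] by simp
qed

lemma dual_sub: "fv.subspace (dual C)"
  by (rule fv.subspaceI) (auto simp: dual_def algebra_simps sum.distrib sum_distrib_left[symmetric])

lemma sep:
  assumes C: "fv.subspace C" and ind: "indep2 (dual C) u v"
  shows "\<exists>x\<in>C. ip u x = 1 \<and> ip v x = 0"
proof (rule ccontr)
  assume no: "\<not> ?thesis"
  show False
  proof (cases "\<forall>x\<in>C. ip u x = 0")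
    case True
    then have "cscale 1 u + cscale 0 v \<in> dual C" by (intro dual_mem) auto
    with ind have "(1::'a) = 0 \<and> (0::'a) = 0" unfolding indep2_def by blast
    then show False by simp
  next
    case False
    then obtain x0 where x0: "x0 \<in> C" "ip u x0 \<noteq> 0" by auto
    define s where "s = ip u x0"
    define r where "r = ip v x0 / s"
    have s0: "s \<noteq> 0" using x0 s_def by simp
    have all: "\<forall>x\<in>C. ip v x = r * ip u x"
    proof (rule ccontr)
      assume "\<not> ?thesis" then obtain x where x: "x\<in>C" "ip v x \<noteq> r * ip u x" by auto
      define z where "z = x - cscale (ip u x / s) x0"
      have zC: "z \<in> C" unfolding z_def using C x x0 by (simp add: fv.subspace_diff fv.subspace_scale)
      have zu: "ip u z = 0" using s0 unfolding z_def s_def by (simp add: ip_diff ip_scale)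
      have zv: "ip v z = ip v x - ip u x * r" unfolding z_def r_def by (simp add: ip_diff ip_scale)
      define t where "t = ip v z"
      have t0: "t \<noteq> 0"
      proof
        assume "t = 0"
        then have "ip v x = ip u x * r" using zv t_def by simp
        with x(2) show False by (simp add: mult.commute)
      qed
      define x1 where "x1 = cscale (1/s) x0 - cscale (r/t) z"
      have "x1 \<in> C" unfolding x1_def using C zC x0 by (simp add: fv.subspace_diff fv.subspace_scale)
      moreover have "ip u x1 = 1" unfolding x1_def using s0 zu by (simp add: ip_diff ip_scale s_def)
      moreover have "ip v x1 = 0" unfolding x1_def using t0 by (simp add: ip_diff ip_scale r_def t_def)
      ultimately show False using no by blast
    qed
    then have "cscale r u + cscale (-1) v \<in> dual C" by (intro dual_mem) auto
    with ind have "r = 0 \<and> (-1::'a) = 0" unfolding indep2_def by blast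
    then show False by simp
  qed
qed


lemma sum_ev: fixes x :: "'n::finite \<Rightarrow> 'a::field" shows "(\<Sum>i\<in>UNIV. x i * ev j i) = x j"
proof -
  have "(\<Sum>i\<in>UNIV. x i * ev j i) = (\<Sum>i\<in>UNIV. if i = j then x i else 0)"
    by (rule sum.cong) (auto simp: ev_def)
  also have "\<dots> = x j" using sum.delta[of UNIV j x] by simp
  finally show ?thesis .
qed

lemma codepart:
  fixes C :: "('n::finite \<Rightarrow> 'a::{finite,field}) set"
  assumes code: "is_code C k" and evK: "\<And>j. ev j \<notin> dual C"
    and ind: "indep2 (dual C) u v" and nl: "\<And>j. ev j \<notin> lne (dual C) u v"
  shows "covering_dim C \<le> enat (k - 2)"
proof -
  have C: "fv.subspace C" and dC: "fv.dim C = k" using code by (auto simp: is_code_def)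
  obtain x1 where x1: "x1 \<in> C" "ip u x1 = 1" "ip v x1 = 0" using sep[OF C ind] by blast
  obtain x2 where x2: "x2 \<in> C" "ip v x2 = 1" "ip u x2 = 0" using sep[OF C indep2_sym[OF ind]] by blast
  define D where "D = {x\<in>C. ip u x = 0 \<and> ip v x = 0}"
  have DC: "D \<subseteq> C" by (auto simp: D_def)
  have Dsub: "fv.subspace D"
    by (rule fv.subspaceI) (auto simp: D_def ip_add ip_scale ip_zero C fv.subspace_0 fv.subspace_add fv.subspace_scale)
  have SuppD: "Supp D = UNIV"
  proof (rule ccontr)
    assume "Supp D \<noteq> UNIV" then obtain j where j: "\<forall>x\<in>D. x j = 0" by (auto simp: Supp_def supp_def)
    define kk where "kk = (\<lambda>t. ev j t - x1 j * u t - x2 j * v t)"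
    have "kk \<in> dual C"
      unfolding dual_def
    proof (clarify)
      fix x assume x: "x \<in> C"
      define z where "z = x - cscale (ip u x) x1 - cscale (ip v x) x2"
      have "z \<in> C" unfolding z_def using C x x1 x2 by (simp add: fv.subspace_diff fv.subspace_scale)
      moreover have "ip u z = 0" "ip v z = 0" unfolding z_def using x1 x2 by (simp_all add: ip_diff ip_scale)
      ultimately have "z \<in> D" by (simp add: D_def)
      then have "z j = 0" using j by auto
      then have "x j - ip u x * x1 j - ip v x * x2 j = 0" by (simp add: z_def)
      moreover have "(\<Sum>i\<in>UNIV. x i * kk i) = (\<Sum>i\<in>UNIV. x i * ev j i) - x1 j * ip u x - x2 j * ip v x"
        unfolding kk_def ip_def by (simp add: algebra_simps sum_subtractf sum_distrib_left sum.distrib)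
      ultimately show "(\<Sum>i\<in>UNIV. x i * kk i) = 0" by (simp add: sum_ev algebra_simps)
    qed
    moreover have "ev j = cscale (x1 j) u + cscale (x2 j) v + kk" by (auto simp: kk_def fun_eq_iff)
    ultimately have "ev j \<in> lne (dual C) u v" unfolding lne_def by blast
    with nl show False by blast
  qed
  obtain B where B: "B \<subseteq> D" "fv.independent B" "D \<subseteq> fv.span B" "card B = fv.dim D"
    using fv.basis_exists by blast
  have finB: "finite B" by simp
  have spB: "fv.span B \<subseteq> D" using fv.span_minimal[OF B(1) Dsub] .
  have x2n: "x2 \<notin> fv.span B" using spB x2 by (auto simp: D_def)
  have x1n: "x1 \<notin> fv.span (insert x2 B)"
  proof
    assume "x1 \<in> fv.span (insert x2 B)"
    then have "x1 \<in> {x. \<exists>k. x - cscale k x2 \<in> fv.span B}" using fv.span_insert[of x2 B] by simp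
    then obtain t where "x1 - cscale t x2 \<in> fv.span B" by auto
    then have "x1 - cscale t x2 \<in> D" using spB by auto
    then have "ip u (x1 - cscale t x2) = 0" by (simp add: D_def)
    with x1 x2 show False by (simp add: ip_diff ip_scale)
  qed
  have indep: "fv.independent (insert x1 (insert x2 B))"
    by (intro fv.independent_insertI x1n x2n B(2))
  have x2B: "x2 \<notin> B" using x2n fv.span_base by blast
  have x1B: "x1 \<notin> insert x2 B" using x1n fv.span_base by blast
  have cardI: "card (insert x1 (insert x2 B)) = card B + 2" using x1B x2B finB by simp
  obtain BC where BC: "BC \<subseteq> C" "fv.independent BC" "C \<subseteq> fv.span BC" "card BC = fv.dim C"
    using fv.basis_exists by blast
  have "insert x1 (insert x2 B) \<subseteq> fv.span BC" using BC(3) x1 x2 B(1) DC by auto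
  then have "card (insert x1 (insert x2 B)) \<le> card BC"
    using fv.independent_span_bound[OF _ indep] by simp
  then have dimD: "fv.dim D + 2 \<le> k" using cardI B(4) BC(4) dC by simp
  have posD: "0 < fv.dim D"
  proof (rule ccontr)
    assume "\<not> 0 < fv.dim D"
    then have "B = {}" using B(4) finB by simp
    then have D0: "D \<subseteq> {0}" using B(3) by simp
    obtain j :: 'n where True by simp
    have "j \<in> Supp D" using SuppD by simp
    then obtain x where "x \<in> D" "x j \<noteq> 0" by (auto simp: Supp_def supp_def)
    with D0 show False by auto
  qed
  have SuppC: "Supp C = UNIV"
  proof (rule ccontr)
    assume "Supp C \<noteq> UNIV" then obtain j where j: "\<forall>x\<in>C. x j = 0" by (auto simp: Supp_def supp_def)
    have "ev j \<in> dual C" unfolding dual_def using j by (simp add: sum_ev)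
    with evK show False by blast
  qed
  have P: "0 < fv.dim D \<and> (\<exists>D'. fv.subspace D' \<and> D' \<subseteq> C \<and> fv.dim D' = fv.dim D \<and> Supp D' = UNIV)"
    using posD Dsub DC SuppD by blast
  have "(LEAST r. 0 < r \<and> (\<exists>D. fv.subspace D \<and> D \<subseteq> C \<and> fv.dim D = r \<and> Supp D = UNIV)) \<le> fv.dim D"
    by (rule Least_le) (rule P)
  then show ?thesis unfolding covering_dim_def using SuppC dimD by simp
qed

theorem mainTheorem11:
  fixes C :: "('n::finite \<Rightarrow> 'a::{finite,field}) set" and k :: nat
  assumes "is_code C k"
    and "min_dist (dual C) = 4"
  shows "covering_dim C \<le> enat (k - 2)"
proof (rule ccontr)
  assume neg: "\<not> ?thesis"
  have wt: "4 \<le> card (supp y)" if "y \<in> dual C" "y \<noteq> 0" for y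
  proof -
    have "min_dist (dual C) \<le> enat (weight y)" unfolding min_dist_def
      by (rule INF_lower) (use that in auto)
    with assms(2) show ?thesis by (simp add: weight_def)
  qed
  interpret codeK "dual C" by unfold_locales (auto simp: dual_sub wt)
  have "dual C - {0} \<noteq> {}"
  proof
    assume e: "dual C - {0} = {}"
    have "min_dist (dual C) = top" unfolding min_dist_def e by simp
    then have "min_dist (dual C) = \<infinity>" by (simp add: top_enat_def)
    with assms(2) show False by simp
  qed
  then obtain y where y: "y \<in> dual C" "y \<noteq> 0" by auto
  have "4 \<le> card (supp y)" using wt y by simp
  then have "3 \<le> card (supp y)" by simp
  then obtain S where S: "S \<subseteq> supp y" "card S = 3" by (rule obtain_subset_with_card_n)
  then obtain a b c :: 'n where abc: "a \<noteq> b" "b \<noteq> c" "a \<noteq> c" unfolding card_3_iff by blast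
  have H: "\<exists>j. ev j \<in> lne (dual C) u v" if "indep2 (dual C) u v" for u v
  proof (rule ccontr)
    assume "\<not> ?thesis"
    then have "covering_dim C \<le> enat (k - 2)"
      using codepart[OF assms(1) ev_notK that] by blast
    with neg show False by simp
  qed
  show False by (rule comb[where a=a and b=b and c=c, OF H abc(1)]) (use abc in auto)
qed

end
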